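(* Let $(X,\tau_1,\tau_2)$ be a bitopological space which is a $j$-$P$-space, $i,j\in\{1,2\}$, $i\ne j$. Let $\{U_\alpha:\alpha\in\Delta\}$ be a family of $(i,j)$-regular open sets and let $\{V_\lambda:\lambda\in\Lambda\}$ be a family of $i$-open sets which refines $\{U_\alpha\}$ and is $j$-locally countable. Then $\{i\text{-}\mathrm{int}(j\text{-}\mathrm{cl}(V_\lambda)):\lambda\in\Lambda\}$ is a family of $\tau^s_{(i,j)}$-open sets which refines $\{U_\alpha:\alpha\in\Delta\}$ and is locally countable with respect to $\tau^s_{(j,i)}$ (i.e. every point has a $\tau^s_{(j,i)}$-open neighbourhood meeting at most countably many of its members).
   Context: $(X,\tau_1,\tau_2)$ is a bitopological space and $i,j\in\{1,2\}$, $i\neq j$. For $k\in\{1,2\}$, $k\text{-}\mathrm{int}$, $k\text{-}\mathrm{cl}$ denote interior and closure with respect to $\tau_k$; "$k$-open" means $\tau_k$-open. A set $A$ is $(i,j)$-regular open if $A=i\text{-}\mathrm{int}(j\text{-}\mathrm{cl}(A))$. The pairwise semiregularization of $(X,\tau_1,\tau_2)$ is $(X,\tau^s_{(1,2)},\tau^s_{(2,1)})$, where $\tau^s_{(i,j)}$ is the topology on $X$ having as a base the family of all $(i,j)$-regular open sets of $(X,\tau_1,\tau_2)$. A family $\mathcal V$ refines $\mathcal U$ if each member of $\mathcal V$ is contained in some member of $\mathcal U$. A family $\mathcal V$ is $k$-locally countable if every $x\in X$ has a $k$-open neighbourhood meeting at most countably many members of $\mathcal V$. $X$ is a $k$-$P$-space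 if every intersection of countably many $k$-open sets is $k$-open. *)

theory Defs
  imports "HOL-Analysis.Analysis"
begin

text \<open>A bitopological space is modelled by two topologies Ti, Tj with the same
  carrier (topspace). Ti plays the role of tau_i, Tj the role of tau_j.\<close>

definition pairwise_regular_open :: "'a topology \<Rightarrow> 'a topology \<Rightarrow> 'a set \<Rightarrow> bool" where
  "pairwise_regular_open Ti Tj A \<longleftrightarrow> A = Ti interior_of (Tj closure_of A)"

text \<open>tau^s_(i,j): the topology having the (i,j)-regular open sets as a base
  (generated by them; they form a base since they cover X and are closed
  under finite intersections).\<close>
definition pairwise_semireg :: "'a topology \<Rightarrow> 'a topology \<Rightarrow> 'a topology" where
  "pairwise_semireg Ti Tj = topology_generated_by {A. pairwise_regular_open Ti Tj A}"

definition refines_fam :: "'c set \<Rightarrow> ('c \<Rightarrow> 'a set) \<Rightarrow> 'b set \<Rightarrow> ('b \<Rightarrow> 'a set) \<Rightarrow> bool" where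
  "refines_fam \<Lambda> V \<Delta> U \<longleftrightarrow> (\<forall>l\<in>\<Lambda>. \<exists>a\<in>\<Delta>. V l \<subseteq> U a)"

definition locally_countable_fam :: "'a topology \<Rightarrow> 'c set \<Rightarrow> ('c \<Rightarrow> 'a set) \<Rightarrow> bool" where
  "locally_countable_fam T \<Lambda> V \<longleftrightarrow>
     (\<forall>x\<in>topspace T. \<exists>W. openin T W \<and> x \<in> W \<and> countable {l\<in>\<Lambda>. V l \<inter> W \<noteq> {}})"

definition P_space :: "'a topology \<Rightarrow> bool" where
  "P_space T \<longleftrightarrow> (\<forall>\<F>. countable \<F> \<and> \<F> \<noteq> {} \<and> (\<forall>S\<in>\<F>. openin T S) \<longrightarrow> openin T (\<Inter>\<F>))"

end

theory Submission
  imports Defs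
begin

lemma reg_int_cl:
  assumes "topspace A = topspace B"
  shows "pairwise_regular_open A B (A interior_of (B closure_of S))"
  unfolding pairwise_regular_open_def
proof
  let ?G = "A interior_of (B closure_of S)"
  have "?G \<subseteq> B closure_of S" by (rule interior_of_subset)
  then have "B closure_of ?G \<subseteq> B closure_of S"
    by (metis closure_of_closure_of closure_of_mono)
  then show "A interior_of (B closure_of ?G) \<subseteq> ?G" by (rule interior_of_mono)
  have "?G \<subseteq> topspace B" using interior_of_subset_topspace assms by metis
  then have "?G \<subseteq> B closure_of ?G" by (rule closure_of_subset)
  then show "?G \<subseteq> A interior_of (B closure_of ?G)"
    by (simp add: interior_of_maximal)
qed

lemma semireg_open:
  assumes "topspace A = topspace B"
  shows "openin (pairwise_semireg A B) (A interior_of (B closure_of S))"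
  unfolding pairwise_semireg_def
  by (rule topology_generated_by_Basis) (simp add: reg_int_cl[OF assms])

lemma semireg_topspace: "topspace (pairwise_semireg Tj Ti) \<subseteq> topspace Tj"
  unfolding pairwise_semireg_def topology_generated_by_topspace
proof (rule Union_least)
  fix A assume "A \<in> {A. pairwise_regular_open Tj Ti A}"
  then have eq: "A = Tj interior_of (Ti closure_of A)" unfolding pairwise_regular_open_def mem_Collect_eq .
  show "A \<subseteq> topspace Tj" by (rule order_trans[OF equalityD1[OF eq] interior_of_subset_topspace])
qed

theorem lemma2:
  fixes Ti Tj :: "'a topology"
    and U :: "'b \<Rightarrow> 'a set" and \<Delta> :: "'b set"
    and V :: "'c \<Rightarrow> 'a set" and \<Lambda> :: "'c set"
  assumes "topspace Ti = topspace Tj"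
    and "P_space Tj"
    and "\<forall>a\<in>\<Delta>. pairwise_regular_open Ti Tj (U a)"
    and "\<forall>l\<in>\<Lambda>. openin Ti (V l)"
    and "refines_fam \<Lambda> V \<Delta> U"
    and "locally_countable_fam Tj \<Lambda> V"
  shows "(\<forall>l\<in>\<Lambda>. openin (pairwise_semireg Ti Tj) (Ti interior_of (Tj closure_of (V l))))
    \<and> refines_fam \<Lambda> (\<lambda>l. Ti interior_of (Tj closure_of (V l))) \<Delta> U
    \<and> locally_countable_fam (pairwise_semireg Tj Ti) \<Lambda> (\<lambda>l. Ti interior_of (Tj closure_of (V l)))"
proof (intro conjI)
  show "\<forall>l\<in>\<Lambda>. openin (pairwise_semireg Ti Tj) (Ti interior_of (Tj closure_of (V l)))"
    using semireg_open[OF assms(1)] by blast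
  show "refines_fam \<Lambda> (\<lambda>l. Ti interior_of (Tj closure_of (V l))) \<Delta> U"
    unfolding refines_fam_def
  proof
    fix l assume "l \<in> \<Lambda>"
    then obtain a where a: "a \<in> \<Delta>" "V l \<subseteq> U a" using assms(5) unfolding refines_fam_def by blast
    have "Ti interior_of (Tj closure_of (V l)) \<subseteq> Ti interior_of (Tj closure_of (U a))"
      by (intro interior_of_mono closure_of_mono a(2))
    also have "\<dots> = U a" using assms(3) a(1) unfolding pairwise_regular_open_def by metis
    finally show "\<exists>a\<in>\<Delta>. Ti interior_of (Tj closure_of (V l)) \<subseteq> U a" using a(1) by blast
  qed
  show "locally_countable_fam (pairwise_semireg Tj Ti) \<Lambda> (\<lambda>l. Ti interior_of (Tj closure_of (V l)))"
    unfolding locally_countable_fam_def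
  proof
    fix x assume x: "x \<in> topspace (pairwise_semireg Tj Ti)"
    have "topspace (pairwise_semireg Tj Ti) \<subseteq> topspace Tj"
      by (rule semireg_topspace)
    with x have xT: "x \<in> topspace Tj" by blast
    then obtain W where W: "openin Tj W" "x \<in> W" "countable {l\<in>\<Lambda>. V l \<inter> W \<noteq> {}}"
      using assms(6) unfolding locally_countable_fam_def by blast
    define G where "G = Tj interior_of (Ti closure_of W)"
    have WT: "W \<subseteq> topspace Ti" using W(1) openin_subset assms(1) by metis
    have "W \<subseteq> G" unfolding G_def
      by (rule interior_of_maximal[OF closure_of_subset[OF WT] W(1)])
    have Go: "openin (pairwise_semireg Tj Ti) G"
      unfolding G_def using semireg_open assms(1) by metis
    have "{l\<in>\<Lambda>. Ti interior_of (Tj closure_of (V l)) \<inter> G \<noteq> {}} \<subseteq> {l\<in>\<Lambda>. V l \<inter> W \<noteq> {}}"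
    proof (rule subsetI)
      fix l assume lm: "l \<in> {l\<in>\<Lambda>. Ti interior_of (Tj closure_of (V l)) \<inter> G \<noteq> {}}"
      then have l: "l \<in> \<Lambda>" "Ti interior_of (Tj closure_of (V l)) \<inter> G \<noteq> {}" by auto
      let ?O = "Ti interior_of (Tj closure_of (V l))"
      have "?O \<inter> Ti closure_of W \<noteq> {}"
        using l(2) interior_of_subset[of Tj "Ti closure_of W"] unfolding G_def by blast
      moreover have "?O \<inter> Ti closure_of W = {} \<longleftrightarrow> ?O \<inter> W = {}"
        by (rule openin_Int_closure_of_eq_empty[OF openin_interior_of])
      ultimately have "?O \<inter> W \<noteq> {}" by simp
      moreover have "?O \<subseteq> Tj closure_of (V l)" by (rule interior_of_subset)
      ultimately have "W \<inter> Tj closure_of (V l) \<noteq> {}" by blast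
      moreover have "W \<inter> Tj closure_of (V l) = {} \<longleftrightarrow> W \<inter> V l = {}"
        by (rule openin_Int_closure_of_eq_empty[OF W(1)])
      ultimately have "W \<inter> V l \<noteq> {}" by simp
      then show "l \<in> {l\<in>\<Lambda>. V l \<inter> W \<noteq> {}}" using l(1) by blast
    qed
    then have "countable {l\<in>\<Lambda>. Ti interior_of (Tj closure_of (V l)) \<inter> G \<noteq> {}}"
      using W(3) countable_subset by blast
    then show "\<exists>W. openin (pairwise_semireg Tj Ti) W \<and> x \<in> W \<and>
        countable {l\<in>\<Lambda>. Ti interior_of (Tj closure_of (V l)) \<inter> W \<noteq> {}}"
      using Go \<open>W \<subseteq> G\<close> W(2) by blast
  qed
qed

end
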